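(* Let $L>0$, let $v_\textup{d}>0$ be a constant, and let $K:\mathbb{R}\to\mathbb{R}$ satisfy the following: the support of $K$ is $[0,R]$ with $0<R<L$; $K\in C^2(0,R)$ with $K,K''\in L^\infty(0,R)$; $K(z)>0$ and $K'(z)<0$ for $z\in(0,R)$; $K(0)=K(R)=0$ and $K(0^+):=\lim_{z\to0^+}K(z)>0$. Consider on the periodic domain $[0,L)$ the nonlocal conservation law \[ \partial_t\rho_t+\partial_x\Big(\rho_t\Big(v_\textup{d}-\int K(y-x)\rho_t(y)\,dy\Big)\Big)=0. \] Then every spatially homogeneous (constant) density $\rho_t(x)\equiv\bar\rho\ge0$ is a solution, and it is locally (i.e. linearly) stable and attractive: for the linearized equation around $\bar\rho$, every spatially periodic Fourier mode $e^{\sigma_k t+\mathbf{i}\frac{2\pi}{L}kx}$ with $k\in\mathbb{Z}\setminus\{0\}$ has $\operatorname{Re}(\sigma_k)<0$.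
   Context: $\mathbf{i}$ denotes the imaginary unit. For the constant solution the velocity is $v[\bar\rho]=v_\textup{d}-\bar\rho\int_0^RK(z)\,dz$. The constant mode $k=0$ is excluded since it corresponds to a constant-in-space perturbation. *)

theory Defs
  imports "HOL-Analysis.Analysis"
begin

definition kernel_assms :: "(real \<Rightarrow> real) \<Rightarrow> real \<Rightarrow> bool" where
  "kernel_assms K R \<longleftrightarrow>
     0 < R \<and>
     closure {z. K z \<noteq> 0} = {0..R} \<and>
     (\<exists>K1 K2. (\<forall>z\<in>{0<..<R}. (K has_real_derivative K1 z) (at z)) \<and>
              (\<forall>z\<in>{0<..<R}. (K1 has_real_derivative K2 z) (at z)) \<and>
              continuous_on {0<..<R} K2 \<and>
              bounded (K ` {0<..<R}) \<and> bounded (K2 ` {0<..<R}) \<and>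
              (\<forall>z\<in>{0<..<R}. K1 z < 0)) \<and>
     (\<forall>z\<in>{0<..<R}. K z > 0) \<and>
     K 0 = 0 \<and> K R = 0 \<and>
     (\<exists>c>0. (K \<longlongrightarrow> c) (at_right 0))"

text \<open>Flux of the nonlocal conservation law
  d/dt rho + d/dx (rho (v_d - int K(y-x) rho(y) dy)) = 0 (x in R, rho L-periodic in x).\<close>
definition nl_flux :: "(real \<Rightarrow> real) \<Rightarrow> real \<Rightarrow> (real \<Rightarrow> real \<Rightarrow> real) \<Rightarrow> real \<Rightarrow> real \<Rightarrow> real" where
  "nl_flux K vd rho t x = rho t x * (vd - integral UNIV (\<lambda>y. K (y - x) * rho t y))"

definition nl_solution :: "(real \<Rightarrow> real) \<Rightarrow> real \<Rightarrow> (real \<Rightarrow> real \<Rightarrow> real) \<Rightarrow> bool" where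
  "nl_solution K vd rho \<longleftrightarrow>
     (\<forall>t>0. \<forall>x. \<exists>a b. ((\<lambda>s. rho s x) has_real_derivative a) (at t) \<and>
                     ((\<lambda>y. nl_flux K vd rho t y) has_real_derivative b) (at x) \<and>
                     a + b = 0)"

definition v_const :: "(real \<Rightarrow> real) \<Rightarrow> real \<Rightarrow> real \<Rightarrow> real \<Rightarrow> real" where
  "v_const K R vd rhob = vd - rhob * integral {0..R} K"

definition lin_flux :: "(real \<Rightarrow> real) \<Rightarrow> real \<Rightarrow> real \<Rightarrow> real \<Rightarrow> (real \<Rightarrow> real \<Rightarrow> complex) \<Rightarrow> real \<Rightarrow> real \<Rightarrow> complex" where
  "lin_flux K R vd rhob u t x =
     complex_of_real (v_const K R vd rhob) * u t x
     - complex_of_real rhob * integral UNIV (\<lambda>y. complex_of_real (K (y - x)) * u t y)"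

definition lin_solution :: "(real \<Rightarrow> real) \<Rightarrow> real \<Rightarrow> real \<Rightarrow> real \<Rightarrow> (real \<Rightarrow> real \<Rightarrow> complex) \<Rightarrow> bool" where
  "lin_solution K R vd rhob u \<longleftrightarrow>
     (\<forall>t>0. \<forall>x. \<exists>a b. ((\<lambda>s. u s x) has_vector_derivative a) (at t) \<and>
                     ((\<lambda>y. lin_flux K R vd rhob u t y) has_vector_derivative b) (at x) \<and>
                     a + b = 0)"

definition fourier_mode :: "real \<Rightarrow> int \<Rightarrow> complex \<Rightarrow> real \<Rightarrow> real \<Rightarrow> complex" where
  "fourier_mode L k \<sigma> t x = exp (\<sigma> * complex_of_real t + \<i> * complex_of_real (2 * pi / L * of_int k * x))"

end

theory Submission imports Defs begin

lemma kernel_facts: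
  assumes "kernel_assms K R"
  obtains K1 c d where "0<R" "\<And>z. z \<notin> {0..R} \<Longrightarrow> K z = 0"
    "\<And>z. z\<in>{0<..<R} \<Longrightarrow> (K has_real_derivative K1 z) (at z)"
    "continuous_on {0<..<R} K1" "\<And>z. z\<in>{0<..<R} \<Longrightarrow> K1 z < 0"
    "\<And>z. z\<in>{0<..<R} \<Longrightarrow> K z > 0" "c>0" "(K \<longlongrightarrow> c) (at_right 0)"
    "d \<ge> 0" "(K \<longlongrightarrow> d) (at_left R)"
proof -
  from assms[unfolded kernel_assms_def] obtain K1 K2 c where
    R: "0<R" and cl: "closure {z. K z \<noteq> 0} = {0..R}" and
    d1: "\<forall>z\<in>{0<..<R}. (K has_real_derivative K1 z) (at z)" and
    d2: "\<forall>z\<in>{0<..<R}. (K1 has_real_derivative K2 z) (at z)" and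
    neg: "\<forall>z\<in>{0<..<R}. K1 z < 0" and pos: "\<forall>z\<in>{0<..<R}. K z > 0" and
    c: "c > 0" "(K \<longlongrightarrow> c) (at_right 0)"
    by blast
  have zero: "K z = 0" if "z \<notin> {0..R}" for z
    using closure_subset[of "{z. K z \<noteq> 0}"] cl that by blast
  have cK1: "continuous_on {0<..<R} K1"
    using d2 by (intro continuous_at_imp_continuous_on) (auto intro: DERIV_isCont)
  have mono: "K y \<le> K x" if "0 < x" "x \<le> y" "y < R" for x y
  proof (cases "x = y")
    case False
    have "K x > K y"
    proof (rule DERIV_neg_imp_decreasing[of x y K])
      show "x < y" using False that by simp
    next
      fix t assume "x \<le> t" "t \<le> y"
      then have "t \<in> {0<..<R}" using that by auto
      then show "\<exists>D. DERIV K t :> D \<and> D < 0" using d1 neg by blast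
    qed
    then show ?thesis by simp
  qed simp
  define d where "d = Inf (K ` {0<..<R})"
  have bdd: "bdd_below (K ` {0<..<R})"
    using pos by (intro bdd_belowI[of _ 0]) (auto intro: less_imp_le)
  have ne: "K ` {0<..<R} \<noteq> {}" using R by auto
  have d0: "d \<ge> 0" unfolding d_def
    using ne pos by (intro cInf_greatest) (auto intro: less_imp_le)
  have dle: "d \<le> K z" if "z \<in> {0<..<R}" for z
    unfolding d_def using bdd that by (intro cInf_lower) auto
  have lim: "(K \<longlongrightarrow> d) (at_left R)"
  proof (rule order_tendstoI)
    fix y assume "y < d"
    then show "eventually (\<lambda>z. y < K z) (at_left R)"
      unfolding eventually_at_left[OF R]
      using dle R by (intro exI[of _ 0]) force
  next
    fix y assume "d < y"
    then obtain w where w: "w \<in> K ` {0<..<R}" "w < y"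
      unfolding d_def using ne by (meson cInf_lessD)
    then obtain z0 where z0: "z0 \<in> {0<..<R}" "K z0 < y" by auto
    then have "z0 < R" by auto
    then show "eventually (\<lambda>z. K z < y) (at_left R)"
      unfolding eventually_at_left[OF \<open>z0 < R\<close>]
      using mono[of z0] z0 by (intro exI[of _ z0]) (smt (verit) greaterThanLessThan_iff)
  qed
  show ?thesis
    using that[of K1 c d] R zero d1 cK1 neg pos c d0 lim by blast
qed


lemma sine_pos:
  fixes K K1 :: "real \<Rightarrow> real" and R c d w :: real
  assumes R: "0<R"
    and dK: "\<And>z. z\<in>{0<..<R} \<Longrightarrow> (K has_real_derivative K1 z) (at z)"
    and cK1: "continuous_on {0<..<R} K1" and neg: "\<And>z. z\<in>{0<..<R} \<Longrightarrow> K1 z < 0"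
    and limc: "(K \<longlongrightarrow> c) (at_right 0)"
    and d0: "d \<ge> 0" and limd: "(K \<longlongrightarrow> d) (at_left R)"
    and w: "w \<noteq> 0"
    and g_def: "g = (\<lambda>z. if z \<le> 0 then c else if z \<ge> R then d else K z)"
  shows "continuous_on {0..R} g" "w * integral {0..R} (\<lambda>z. g z * sin (w*z)) > 0"
proof -
  define k1 where "k1 = (\<lambda>z. if z \<in> {0<..<R} then K1 z else 0)"
  have gK: "g z = K z" if "z \<in> {0<..<R}" for z using that by (auto simp: g_def)
  have dg: "(g has_real_derivative k1 z) (at z)" if "z \<in> {0<..<R}" for z
    using has_field_derivative_transform_within_open[OF dK[OF that] _ that, of g] gK that
    by (auto simp: k1_def)
  show cg: "continuous_on {0..R} g"
  proof (rule continuous_on_IccI)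
    have "eventually (\<lambda>z. K z = g z) (at_right 0)"
      unfolding eventually_at_right[OF R] using gK R by (intro exI[of _ R]) auto
    then show "(g \<longlongrightarrow> g 0) (at_right 0)" using limc tendsto_cong by (force simp: g_def)
    have "eventually (\<lambda>z. K z = g z) (at_left R)"
      unfolding eventually_at_left[OF R] using gK R by (intro exI[of _ 0]) auto
    then show "(g \<longlongrightarrow> g R) (at_left R)" using limd tendsto_cong R by (force simp: g_def)
    fix x assume "0 < x" "x < R"
    then show "g \<midarrow>x\<rightarrow> g x" using DERIV_isCont[OF dg[of x]] by (simp add: isCont_def)
  qed (rule R)
  have g0: "g 0 = c" and gR: "g R = d" using R by (auto simp: g_def)
  have I1: "(k1 has_integral (d - c)) {0..R}"
    using fundamental_theorem_of_calculus_interior[of 0 R g k1] R cg dg g0 gR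
    by (auto simp: has_real_derivative_iff_has_vector_derivative)
  define h where "h = (\<lambda>z. - (g z * cos (w*z)) / w)"
  have ch: "continuous_on {0..R} h" unfolding h_def
    by (intro continuous_intros cg) (use w in auto)
  have dh: "(h has_real_derivative (g z * sin (w*z) - k1 z * cos (w*z) / w)) (at z)"
    if "z \<in> {0<..<R}" for z
  proof -
    have "(h has_real_derivative (- (k1 z * cos (w*z) + g z * (- sin (w*z) * (w * 1))) / w)) (at z)"
      unfolding h_def using dg[OF that] w by (intro derivative_eq_intros) auto
    then show ?thesis using w by (simp add: field_simps)
  qed
  have I2: "((\<lambda>z. g z * sin (w*z) - k1 z * cos (w*z) / w) has_integral (h R - h 0)) {0..R}"
    using fundamental_theorem_of_calculus_interior[of 0 R h] R ch dh
    by (auto simp: has_real_derivative_iff_has_vector_derivative)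
  define S where "S = integral {0..R} (\<lambda>z. g z * sin (w*z))"
  have I3: "((\<lambda>z. g z * sin (w*z)) has_integral S) {0..R}"
    unfolding S_def by (intro integrable_integral integrable_continuous_interval continuous_intros cg)
  have I4: "((\<lambda>z. k1 z * cos (w*z) / w) has_integral (S - (h R - h 0))) {0..R}"
    using has_integral_diff[OF I3 I2] by simp
  have I5: "((\<lambda>z. k1 z * cos (w*z)) has_integral (w * (S - (h R - h 0)))) {0..R}"
    using has_integral_mult_right[OF I4, of w] w by simp
  define J where "J = (\<lambda>z. k1 z * cos (w*z) - k1 z)"
  define V where "V = w * (S - (h R - h 0)) - (d - c)"
  have IJ: "(J has_integral V) {0..R}" unfolding J_def V_def
    using has_integral_diff[OF I5 I1] by simp
  have Vval: "w * S = V + d * (1 - cos (w*R))"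
    unfolding V_def h_def using g0 gR w by (simp add: field_simps)
  have Jnn: "J z \<ge> 0" for z
  proof -
    have "k1 z \<le> 0" using neg[of z] by (auto simp: k1_def less_imp_le)
    moreover have "cos (w*z) - 1 \<le> 0" by simp
    ultimately have "0 \<le> k1 z * (cos (w*z) - 1)" by (rule mult_nonpos_nonpos)
    then show ?thesis by (simp add: J_def algebra_simps)
  qed
  define b where "b = min (R/2) (pi / \<bar>w\<bar>)"
  define a where "a = b / 2"
  have b0: "b > 0" using R w by (auto simp: b_def)
  have "b \<le> R/2" unfolding b_def by (rule min.cobounded1)
  then have ab: "0 < a" "a < b" "b < R" using b0 R unfolding a_def by auto
  have bw: "\<bar>w\<bar> * b \<le> pi" using w by (auto simp: b_def field_simps min_def)
  have Jpos: "J z > 0" if "z \<in> {a..b}" for z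
  proof -
    have z: "z \<in> {0<..<R}" using that ab by auto
    have "\<bar>w * z\<bar> \<le> pi" using bw that ab
      by (auto simp: abs_mult intro!: order_trans[OF mult_left_mono[of z b "\<bar>w\<bar>"]])
    moreover have "\<bar>w * z\<bar> > 0" using w z by auto
    ultimately have "cos \<bar>w*z\<bar> < cos 0" by (intro cos_monotone_0_pi) auto
    then have "cos (w*z) - 1 < 0" by simp
    moreover have "k1 z < 0" using neg z by (auto simp: k1_def)
    ultimately have "0 < k1 z * (cos (w*z) - 1)" by (simp add: mult_neg_neg)
    then show ?thesis by (simp add: J_def algebra_simps)
  qed
  have cJ: "continuous_on {a..b} J"
  proof -
    have sub: "{a..b} \<subseteq> {0<..<R}" using ab by auto
    have "continuous_on {a..b} (\<lambda>z. K1 z * cos (w*z) - K1 z)"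
      by (intro continuous_intros continuous_on_subset[OF cK1 sub])
    then show ?thesis
      by (rule continuous_on_eq) (use sub in \<open>auto simp: J_def k1_def\<close>)
  qed
  obtain z0 where z0: "z0 \<in> {a..b}" "\<And>y. y \<in> {a..b} \<Longrightarrow> J z0 \<le> J y"
    using continuous_attains_inf[OF compact_Icc _ cJ] ab by fastforce
  define m where "m = J z0"
  have m0: "m > 0" using Jpos z0 by (auto simp: m_def)
  have intJ: "J integrable_on {0..R}" using IJ by blast
  have intJab: "J integrable_on {a..b}"
    by (rule integrable_on_subinterval[OF intJ]) (use ab in auto)
  have "integral {a..b} (\<lambda>_. m) \<le> integral {a..b} J"
    by (rule integral_le) (use intJab z0 in \<open>auto simp: m_def\<close>)
  moreover have "integral {a..b} (\<lambda>_. m) = (b - a) * m" using ab by simp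
  moreover have "integral {a..b} J \<le> integral {0..R} J"
    by (rule integral_subset_le) (use ab intJab intJ Jnn in auto)
  moreover have "integral {0..R} J = V" using IJ by blast
  ultimately have "V > 0" using m0 ab by (smt (verit) mult_pos_pos)
  moreover have "d * (1 - cos (w*R)) \<ge> 0" using d0 by simp
  ultimately show "w * S > 0" using Vval by linarith
qed


lemma shift_UNIV:
  fixes f :: "real \<Rightarrow> 'a::banach"
  assumes "(f has_integral I) {0..R}" "\<And>z. z \<notin> {0..R} \<Longrightarrow> f z = 0"
  shows "((\<lambda>y. f (y - x)) has_integral I) UNIV"
proof -
  have "((\<lambda>y. f (y + - x)) has_integral I) {0 - - x..R - - x}"
    by (rule has_integral_shift_real_ivl[OF assms(1)])
  then have "((\<lambda>y. f (y - x)) has_integral I) {x..R + x}" by simp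
  then show ?thesis
    by (rule has_integral_on_superset) (use assms(2) in auto)
qed

lemma pt_eq:
  fixes s t x y w :: real and \<sigma> :: complex
  shows "exp (\<sigma> * complex_of_real t + \<i> * complex_of_real (w * y)) * complex_of_real s
     = exp (\<sigma> * complex_of_real t + \<i> * complex_of_real (w * x)) *
       (complex_of_real s * exp (\<i> * complex_of_real (w * (y - x))))"
proof -
  have "\<sigma> * complex_of_real t + \<i> * complex_of_real (w * y) =
        (\<sigma> * complex_of_real t + \<i> * complex_of_real (w * x)) + \<i> * complex_of_real (w * (y - x))"
    by (simp add: algebra_simps)
  then show ?thesis by (simp only: exp_add) (simp add: algebra_simps)
qed

lemma Im_G: "Im (complex_of_real a * exp (\<i> * complex_of_real b)) = a * sin b"
  by (simp add: Im_exp Re_exp)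


theorem mainTheorem2:
  fixes L R vd :: real and K :: "real \<Rightarrow> real"
  assumes "L > 0" and "vd > 0" and "kernel_assms K R" and "R < L"
  shows "(\<forall>rhob::real. rhob \<ge> 0 \<longrightarrow> nl_solution K vd (\<lambda>t x. rhob)) \<and>
         (\<forall>rhob::real. rhob > 0 \<longrightarrow> (\<forall>k::int. k \<noteq> 0 \<longrightarrow>
            (\<exists>\<sigma>. lin_solution K R vd rhob (fourier_mode L k \<sigma>)) \<and>
            (\<forall>\<sigma>. lin_solution K R vd rhob (fourier_mode L k \<sigma>) \<longrightarrow> Re \<sigma> < 0)))"
proof -
  obtain K1 c d where R: "0<R" and zero: "\<And>z. z \<notin> {0..R} \<Longrightarrow> K z = 0"
    and dK: "\<And>z. z\<in>{0<..<R} \<Longrightarrow> (K has_real_derivative K1 z) (at z)"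
    and cK1: "continuous_on {0<..<R} K1" and neg: "\<And>z. z\<in>{0<..<R} \<Longrightarrow> K1 z < 0"
    and pos: "\<And>z. z\<in>{0<..<R} \<Longrightarrow> K z > 0" and c: "c>0" "(K \<longlongrightarrow> c) (at_right 0)"
    and d: "d \<ge> 0" "(K \<longlongrightarrow> d) (at_left R)"
    using kernel_facts[OF assms(3)] by metis
  define g where "g = (\<lambda>z. if z \<le> 0 then c else if z \<ge> R then d else K z)"
  have cg: "continuous_on {0..R} g"
    using sine_pos(1)[OF R dK cK1 neg c(2) d, of 1 g] g_def by simp
  have gK: "g z = K z" if "z \<in> {0..R} - {0, R}" for z using that by (auto simp: g_def)
  obtain IK where IK: "(K has_integral IK) {0..R}"
  proof -
    have "g integrable_on {0..R}" by (rule integrable_continuous_interval[OF cg])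
    then obtain I where "(g has_integral I) {0..R}" by blast
    then have "(K has_integral I) {0..R}"
      using has_integral_spike_finite_eq[of "{0,R}" "{0..R}" K g I] gK by auto
    then show ?thesis using that by blast
  qed
  have partA: "nl_solution K vd (\<lambda>t x. rhob)" for rhob :: real
    unfolding nl_solution_def
  proof (intro allI impI)
    fix t x :: real
    have "((\<lambda>y'. K (y' - y) * rhob) has_integral (IK * rhob)) UNIV" for y
      by (intro has_integral_mult_left shift_UNIV[OF IK zero]) auto
    then have "integral UNIV (\<lambda>y'. K (y' - y) * rhob) = IK * rhob" for y
      by (rule integral_unique)
    then have "nl_flux K vd (\<lambda>t x. rhob) t y = rhob * (vd - IK * rhob)" for y
      unfolding nl_flux_def by (simp only:)
    then have "(\<lambda>y. nl_flux K vd (\<lambda>t x. rhob) t y) = (\<lambda>y. rhob * (vd - IK * rhob))" by auto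
    then show "\<exists>a b. ((\<lambda>s. rhob) has_real_derivative a) (at t) \<and>
        ((\<lambda>y. nl_flux K vd (\<lambda>t x. rhob) t y) has_real_derivative b) (at x) \<and> a + b = 0"
      by (intro exI[of _ 0]) auto
  qed
  have partB: "(\<exists>\<sigma>. lin_solution K R vd rhob (fourier_mode L k \<sigma>)) \<and>
            (\<forall>\<sigma>. lin_solution K R vd rhob (fourier_mode L k \<sigma>) \<longrightarrow> Re \<sigma> < 0)"
    if rho: "rhob > 0" and k: "k \<noteq> 0" for rhob :: real and k :: int
  proof -
    define w where "w = 2 * pi / L * of_int k"
    have w0: "w \<noteq> 0" using k assms(1) by (simp add: w_def)
    define F where "F = (\<lambda>z. complex_of_real (K z) * exp (\<i> * complex_of_real (w * z)))"
    define G where "G = (\<lambda>z. complex_of_real (g z) * exp (\<i> * complex_of_real (w * z)))"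
    have cG: "continuous_on {0..R} G" unfolding G_def
      by (intro continuous_intros cg)
    define Kh where "Kh = integral {0..R} G"
    have IG: "(G has_integral Kh) {0..R}" unfolding Kh_def
      by (intro integrable_integral integrable_continuous_interval cG)
    have IF: "(F has_integral Kh) {0..R}"
      using has_integral_spike_finite_eq[of "{0,R}" "{0..R}" F G Kh] gK IG
      by (auto simp: F_def G_def)
    have F0: "F z = 0" if "z \<notin> {0..R}" for z using zero[OF that] by (simp add: F_def)
    have ImG: "((\<lambda>z. g z * sin (w*z)) has_integral Im Kh) {0..R}"
      using has_integral_linear[OF IG bounded_linear_Im] unfolding o_def G_def Im_G .
    have Spos: "w * Im Kh > 0"
      using sine_pos(2)[OF R dK cK1 neg c(2) d w0 g_def] ImG by (simp add: integral_unique)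
    define v where "v = v_const K R vd rhob"
    define C where "C = complex_of_real v - complex_of_real rhob * Kh"
    have flux: "lin_flux K R vd rhob (fourier_mode L k \<sigma>) t y = C * fourier_mode L k \<sigma> t y"
      for \<sigma> t y
    proof -
      have "((\<lambda>y'. complex_of_real (K (y' - y)) * fourier_mode L k \<sigma> t y') has_integral
              (fourier_mode L k \<sigma> t y * Kh)) UNIV"
      proof -
        have "((\<lambda>y'. fourier_mode L k \<sigma> t y * F (y' - y)) has_integral
              (fourier_mode L k \<sigma> t y * Kh)) UNIV"
          by (intro has_integral_mult_right shift_UNIV[OF IF F0]) auto
        moreover have "fourier_mode L k \<sigma> t y * F (y' - y) =
            complex_of_real (K (y' - y)) * fourier_mode L k \<sigma> t y'" for y'
          unfolding fourier_mode_def F_def w_def[symmetric]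
          using pt_eq[of \<sigma> t w y' "K (y' - y)" y] by (simp add: ac_simps) metis
        ultimately show ?thesis by simp
      qed
      then show ?thesis unfolding lin_flux_def C_def v_def
        by (simp add: integral_unique algebra_simps)
    qed
    have dt: "((\<lambda>s. fourier_mode L k \<sigma> s x) has_vector_derivative
               (\<sigma> * fourier_mode L k \<sigma> t x)) (at t)" for \<sigma> t x
    proof -
      have "((\<lambda>z. exp (\<sigma> * z + \<i> * complex_of_real (w * x))) has_field_derivative
               (exp (\<sigma> * complex_of_real t + \<i> * complex_of_real (w * x)) * (\<sigma> * 1 + 0)))
             (at (complex_of_real t))"
        by (intro derivative_eq_intros) auto
      from has_vector_derivative_real_field[OF this]
      show ?thesis unfolding fourier_mode_def w_def by (simp add: algebra_simps)
    qed
    have dx: "((\<lambda>y. lin_flux K R vd rhob (fourier_mode L k \<sigma>) t y) has_vector_derivative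
               (C * (\<i> * complex_of_real w) * fourier_mode L k \<sigma> t x)) (at x)" for \<sigma> t x
    proof -
      have "((\<lambda>z. C * exp (\<sigma> * complex_of_real t + \<i> * (complex_of_real w * z))) has_field_derivative
               (C * (exp (\<sigma> * complex_of_real t + \<i> * (complex_of_real w * complex_of_real x))
                  * (0 + \<i> * (complex_of_real w * 1)))))
             (at (complex_of_real x))"
        by (intro derivative_eq_intros) auto
      from has_vector_derivative_real_field[OF this]
      show ?thesis unfolding flux fourier_mode_def w_def by (simp add: algebra_simps)
    qed
    define \<sigma>0 where "\<sigma>0 = - C * (\<i> * complex_of_real w)"
    have ex: "lin_solution K R vd rhob (fourier_mode L k \<sigma>0)"
      unfolding lin_solution_def
    proof (intro allI impI)
      fix t x :: real
      show "\<exists>a b. ((\<lambda>s. fourier_mode L k \<sigma>0 s x) has_vector_derivative a) (at t) \<and>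
             ((\<lambda>y. lin_flux K R vd rhob (fourier_mode L k \<sigma>0) t y) has_vector_derivative b) (at x) \<and>
             a + b = 0"
        using dt[of \<sigma>0 x t] dx[of \<sigma>0 t x] by (intro exI conjI) (auto simp: \<sigma>0_def algebra_simps)
    qed
    have st: "Re \<sigma> < 0" if sol: "lin_solution K R vd rhob (fourier_mode L k \<sigma>)" for \<sigma>
    proof -
      obtain a b where ab: "((\<lambda>s. fourier_mode L k \<sigma> s 0) has_vector_derivative a) (at 1)"
        "((\<lambda>y. lin_flux K R vd rhob (fourier_mode L k \<sigma>) 1 y) has_vector_derivative b) (at 0)"
        "a + b = 0"
        using sol unfolding lin_solution_def by (meson zero_less_one)
      have "a = \<sigma> * fourier_mode L k \<sigma> 1 0" using vector_derivative_unique_at[OF ab(1) dt] .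
      moreover have "b = C * (\<i> * complex_of_real w) * fourier_mode L k \<sigma> 1 0"
        using vector_derivative_unique_at[OF ab(2) dx] .
      moreover have "fourier_mode L k \<sigma> 1 0 \<noteq> 0" by (simp add: fourier_mode_def)
      ultimately have "\<sigma> + C * (\<i> * complex_of_real w) = 0" using ab(3)
        by (metis distrib_right mult_eq_0_iff)
      then have "\<sigma> = - C * (\<i> * complex_of_real w)" by (simp add: algebra_simps eq_neg_iff_add_eq_0)
      then have "Re \<sigma> = - rhob * (w * Im Kh)" by (simp add: C_def)
      then show ?thesis using rho Spos by (simp add: mult_pos_pos)
    qed
    show ?thesis using ex st by blast
  qed
  show ?thesis using partA partB by auto
qed

end
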